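(* Let $G=(V,E)$ be a connected undirected graph on $n$ nodes with Laplacian $L$, let $\kappa_1,\dots,\kappa_n>0$, $D_\kappa=\mathrm{diag}(\kappa_1,\dots,\kappa_n)$, and for $S\subseteq V$ let $Q_S=L+D_\kappa D_S$, where $D_S$ is the diagonal $0/1$ matrix with $(D_S)_{ii}=1$ iff $i\in S$ (write $Q_v$ for $Q_{\{v\}}$). For nonempty $S$ let $H(S)=\frac12\mathrm{tr}(Q_S^{-1})$. Let $k\ge1$ be an integer, let $\hat H=\min\{H(S): S\subseteq V,\ S\neq\emptyset,\ |S|\le k\}$, and let $B=\max_{v\in V}\mathrm{tr}(Q_v^{-1})$. Let $S_g$ be the output of the following Greedy Algorithm: initialize $S=\{v\}$ where $v$ minimizes $\mathrm{tr}(Q_v^{-1})$ over $v\in V$; then for $i=2,\dots,k$: choose $v\in V\setminus S$ minimizing $\mathrm{tr}(Q_{S\cup\{v\}}^{-1})$; if $\mathrm{tr}(Q_{S\cup\{v\}}^{-1})<\mathrm{tr}(Q_S^{-1})$ set $S\leftarrow S\cup\{v\}$, otherwise stop and return $S$; after the loop return $S$. (Ties are broken arbitrarily.) Then: (1) if $|S_g|<k$, then $H(S_g)=\hat H$, i.e., $S_g$ is an optimal leader set; (2) if $|S_g|=k$, then $H(S_g)\le \left(1-\frac1e\right)\hat H+\frac{B}{e}$.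
   Context: For nonempty $S$, $Q_S$ is positive definite. $H(S)$ is the total steady-state variance of the leader–follower consensus dynamics $\dot x=-(L+D_\kappa D_S)x+w$ with white noise $w$, where $S$ is the set of leaders; the $k$-leader selection problem asks to minimize $H(S)$ subject to $|S|\le k$. *)

theory Defs
  imports "HOL-Analysis.Analysis"
begin

text \<open>Undirected simple graph on the finite vertex type 'n, given by an adjacency
relation E (assumed symmetric and irreflexive in the theorem).\<close>

definition graph_connected :: "('n \<Rightarrow> 'n \<Rightarrow> bool) \<Rightarrow> bool" where
  "graph_connected E \<longleftrightarrow> (\<forall>u v. (u, v) \<in> {(x, y). E x y}\<^sup>*)"

definition laplacian :: "('n::finite \<Rightarrow> 'n \<Rightarrow> bool) \<Rightarrow> real^'n^'n" where
  "laplacian E = (\<chi> i j. if i = j then real (card {w. E i w}) else if E i j then -1 else 0)"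

definition QS :: "('n::finite \<Rightarrow> 'n \<Rightarrow> bool) \<Rightarrow> ('n \<Rightarrow> real) \<Rightarrow> 'n set \<Rightarrow> real^'n^'n" where
  "QS E \<kappa> S = laplacian E + (\<chi> i j. if i = j \<and> i \<in> S then \<kappa> i else 0)"

definition trQinv :: "('n::finite \<Rightarrow> 'n \<Rightarrow> bool) \<Rightarrow> ('n \<Rightarrow> real) \<Rightarrow> 'n set \<Rightarrow> real" where
  "trQinv E \<kappa> S = trace (matrix_inv (QS E \<kappa> S))"

definition Hval :: "('n::finite \<Rightarrow> 'n \<Rightarrow> bool) \<Rightarrow> ('n \<Rightarrow> real) \<Rightarrow> 'n set \<Rightarrow> real" where
  "Hval E \<kappa> S = trQinv E \<kappa> S / 2"

definition Hhat :: "('n::finite \<Rightarrow> 'n \<Rightarrow> bool) \<Rightarrow> ('n \<Rightarrow> real) \<Rightarrow> nat \<Rightarrow> real" where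
  "Hhat E \<kappa> k = Min (Hval E \<kappa> ` {S. S \<noteq> {} \<and> card S \<le> k})"

definition Bval :: "('n::finite \<Rightarrow> 'n \<Rightarrow> bool) \<Rightarrow> ('n \<Rightarrow> real) \<Rightarrow> real" where
  "Bval E \<kappa> = Max ((\<lambda>v. trQinv E \<kappa> {v}) ` UNIV)"

text \<open>Possible outputs of the greedy algorithm (ties broken arbitrarily).
  vs lists the vertices in the order they were added; S_i = set (take i vs).
  The algorithm stops either after k vertices, or earlier (with fewer than k
  vertices) when the chosen minimizer (equivalently, every v \<notin> S, since all
  minimizers have the same value) fails to strictly decrease the trace.\<close>
definition greedy_output ::
  "('n::finite \<Rightarrow> 'n \<Rightarrow> bool) \<Rightarrow> ('n \<Rightarrow> real) \<Rightarrow> nat \<Rightarrow> 'n set \<Rightarrow> bool" where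
  "greedy_output E \<kappa> k Sg \<longleftrightarrow>
     (\<exists>vs. vs \<noteq> [] \<and> distinct vs \<and> length vs \<le> k \<and> Sg = set vs \<and>
        (\<forall>v. trQinv E \<kappa> {hd vs} \<le> trQinv E \<kappa> {v}) \<and>
        (\<forall>i. 1 \<le> i \<and> i < length vs \<longrightarrow>
            (\<forall>v. v \<notin> set (take i vs) \<longrightarrow>
                 trQinv E \<kappa> (set (take i vs) \<union> {vs ! i}) \<le> trQinv E \<kappa> (set (take i vs) \<union> {v})) \<and>
            trQinv E \<kappa> (set (take i vs) \<union> {vs ! i}) < trQinv E \<kappa> (set (take i vs))) \<and>
        (length vs < k \<longrightarrow>
            (\<forall>v. v \<notin> set vs \<longrightarrow> trQinv E \<kappa> (set vs) \<le> trQinv E \<kappa> (set vs \<union> {v}))))"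

end

theory Submission
  imports Defs
begin

lemma inv_unique:
  fixes Q P :: "real^'n^'n"
  assumes "Q ** P = mat 1"
  shows "matrix_inv Q = P"
proof -
  have PQ: "P ** Q = mat 1" using assms matrix_left_right_inverse by blast
  have "\<exists>A'. Q ** A' = mat 1 \<and> A' ** Q = mat 1" using assms PQ by blast
  then have M: "Q ** matrix_inv Q = mat 1 \<and> matrix_inv Q ** Q = mat 1"
    unfolding matrix_inv_def by (rule someI_ex)
  have "matrix_inv Q = matrix_inv Q ** (Q ** P)" using assms by simp
  also have "\<dots> = P" using M by (simp add: matrix_mul_assoc)
  finally show ?thesis .
qed

locale LF =
  fixes E :: "'n::finite \<Rightarrow> 'n \<Rightarrow> bool" and \<kappa> :: "'n \<Rightarrow> real"
  assumes sym: "\<And>u v. E u v \<Longrightarrow> E v u"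
    and irrefl: "\<And>v. \<not> E v v"
    and conn: "graph_connected E"
    and kpos: "\<And>i. \<kappa> i > 0"
begin

abbreviation "Q S \<equiv> QS E \<kappa> S"
abbreviation "P S \<equiv> matrix_inv (Q S)"
abbreviation "f S \<equiv> trQinv E \<kappa> S"

lemma Qent: "Q S $ i $ j = (if i = j then real (card {w. E i w}) + (if i \<in> S then \<kappa> i else 0)
   else if E i j then -1 else 0)"
  unfolding QS_def laplacian_def using irrefl by auto

lemma Qmul: "(Q S *v x) $ i = (\<Sum>j\<in>{w. E i w}. x$i - x$j) + (if i \<in> S then \<kappa> i * x$i else 0)"
proof -
  have "(Q S *v x) $ i = (\<Sum>j\<in>UNIV. Q S $ i $ j * x $ j)"
    by (simp add: matrix_vector_mult_def)
  also have "\<dots> = (\<Sum>j\<in>UNIV. (if j = i then (real (card {w. E i w}) + (if i \<in> S then \<kappa> i else 0)) * x$i else 0)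
        + (if E i j then - x$j else 0))"
    by (rule sum.cong) (auto simp: Qent irrefl)
  also have "\<dots> = (real (card {w. E i w}) + (if i \<in> S then \<kappa> i else 0)) * x$i + (\<Sum>j\<in>{w. E i w}. - x$j)"
    by (simp add: sum.distrib sum.If_cases)
  also have "\<dots> = (\<Sum>j\<in>{w. E i w}. x$i - x$j) + (if i \<in> S then \<kappa> i * x$i else 0)"
    by (simp add: sum_subtractf sum_negf algebra_simps)
  finally show ?thesis .
qed


lemma minp:
  assumes S: "S \<noteq> {}" and nn: "\<And>i. (Q S *v x) $ i \<ge> 0"
  shows "x $ i \<ge> 0"
proof (rule ccontr)
  assume neg: "\<not> x $ i \<ge> 0"
  define m where "m = Min (range (\<lambda>i. x$i))"
  have mle: "m \<le> x$j" for j unfolding m_def by (rule Min_le) auto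
  have "m \<in> range (\<lambda>i. x$i)" unfolding m_def by (rule Min_in) auto
  then obtain i0 where i0: "x$i0 = m" by auto
  have mneg: "m < 0" using mle[of i] neg by linarith
  define M where "M = {i. x$i = m}"
  have key: "(\<forall>j. E i j \<longrightarrow> j \<in> M) \<and> i \<notin> S" if iM: "i \<in> M" for i
  proof -
    have xi: "x$i = m" using iM M_def by auto
    have t1: "(\<Sum>j\<in>{w. E i w}. x$i - x$j) \<le> 0"
      by (rule sum_nonpos) (use xi mle in auto)
    have t2: "(if i \<in> S then \<kappa> i * x$i else 0) \<le> 0"
      using xi mneg kpos[of i] by (simp add: mult_nonneg_nonpos)
    have "0 \<le> (\<Sum>j\<in>{w. E i w}. x$i - x$j) + (if i \<in> S then \<kappa> i * x$i else 0)"
      using nn[of i] by (simp add: Qmul)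
    then have e1: "(\<Sum>j\<in>{w. E i w}. x$j - x$i) = 0"
      and e2: "(if i \<in> S then \<kappa> i * x$i else 0) = 0"
      using t1 t2 by (simp_all add: sum_subtractf)
    have "\<forall>j\<in>{w. E i w}. x$j - x$i = 0"
      using iffD1[OF sum_nonneg_eq_0_iff e1] xi mle by auto
    moreover have "i \<notin> S" using e2 xi mneg kpos[of i] by (auto split: if_splits)
    ultimately show ?thesis using xi M_def by auto
  qed
  have "v \<in> M" for v
  proof -
    have "(i0, v) \<in> {(x, y). E x y}\<^sup>*" using conn unfolding graph_connected_def by blast
    then show ?thesis
    proof (induction rule: rtrancl_induct)
      case base then show ?case using i0 M_def by auto
    next
      case (step y z) then show ?case using key by auto
    qed
  qed
  then show False using S key by auto
qed

lemma QP:
  assumes S: "S \<noteq> {}"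
  shows "Q S ** P S = mat 1" "P S ** Q S = mat 1"
proof -
  have "x = 0" if "Q S *v x = 0" for x
  proof -
    have a: "x$i \<ge> 0" for i by (rule minp[OF S]) (use that in simp)
    have c: "(Q S *v (-x))$i = -((Q S *v x)$i)" for i by (simp add: matrix_vector_mult_def sum_negf)
    have b: "(-x)$i \<ge> 0" for i by (rule minp[OF S]) (simp add: c that)
    show ?thesis using a b by (auto simp: vec_eq_iff intro: antisym)
  qed
  then obtain B where "B ** Q S = mat 1" using matrix_left_invertible_ker by blast
  then have QB: "Q S ** B = mat 1" using matrix_left_right_inverse by blast
  then have "P S = B" by (rule inv_unique)
  then show "Q S ** P S = mat 1" "P S ** Q S = mat 1" using QB matrix_left_right_inverse by auto
qed

lemma QPent: "S \<noteq> {} \<Longrightarrow> (\<Sum>l\<in>UNIV. Q S $ i $ l * P S $ l $ j) = (if i = j then 1 else 0)"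
  using QP(1)[of S] by (simp add: vec_eq_iff matrix_matrix_mult_def mat_def)

lemma Pnn:
  assumes S: "S \<noteq> {}"
  shows "P S $ i $ j \<ge> 0"
proof -
  define x where "x = (\<chi> i. P S $ i $ j)"
  have "(Q S *v x) $ k \<ge> 0" for k
    using QPent[OF S, of k j] by (simp add: x_def matrix_vector_mult_def)
  then have "x $ i \<ge> 0" by (rule minp[OF S])
  then show ?thesis by (simp add: x_def)
qed

lemma Qsym: "transpose (Q S) = Q S"
  by (auto simp: vec_eq_iff transpose_def Qent dest: sym)

lemma Psym:
  assumes S: "S \<noteq> {}"
  shows "P S $ i $ j = P S $ j $ i"
proof -
  have "transpose (P S) ** Q S = mat 1"
    using arg_cong[OF QP(1)[OF S], of transpose] by (simp add: matrix_transpose_mul Qsym)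
  then have "Q S ** transpose (P S) = mat 1" using matrix_left_right_inverse by blast
  then have "P S = transpose (P S)" by (rule inv_unique)
  then show ?thesis by (metis transpose_def vec_lambda_beta)
qed

lemma SM:
  assumes S: "S \<noteq> {}" and u: "u \<notin> S"
  shows "P (insert u S) $ i $ j = P S $ i $ j - \<kappa> u * P S $ i $ u * P S $ u $ j / (1 + \<kappa> u * P S $ u $ u)"
proof -
  define p where "p = P S"
  define d where "d = 1 + \<kappa> u * p $ u $ u"
  define c where "c = \<kappa> u / d"
  have dpos: "d > 0" unfolding d_def p_def using Pnn[OF S, of u u] kpos[of u]
    by (simp add: add_pos_nonneg)
  have cd: "c * d = \<kappa> u" unfolding c_def using dpos by simp
  define P' where "P' = (\<chi> i j. p$i$j - c * p$i$u * p$u$j)"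
  have Q'ent: "Q (insert u S) $ i $ l = Q S $ i $ l + (if i = u \<and> l = u then \<kappa> u else 0)" for i l
    using u by (simp add: Qent)
  have QPp: "(\<Sum>l\<in>UNIV. Q S $ i $ l * p $ l $ j) = (if i = j then 1 else 0)" for i j
    unfolding p_def by (rule QPent[OF S])
  have main: "(\<Sum>l\<in>UNIV. Q (insert u S) $ i $ l * P' $ l $ j) = (if i = j then 1 else 0)" for i j
  proof -
    have "(\<Sum>l\<in>UNIV. Q (insert u S) $ i $ l * P' $ l $ j)
        = (\<Sum>l\<in>UNIV. Q S $ i $ l * p $ l $ j - (c * p $ u $ j) * (Q S $ i $ l * p $ l $ u))
          + (\<Sum>l\<in>UNIV. if l = u then (if i = u then \<kappa> u * (p$u$j - c * p$u$u * p$u$j) else 0) else 0)"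
      unfolding sum.distrib[symmetric]
      by (rule sum.cong) (auto simp: Q'ent P'_def algebra_simps)
    also have "\<dots> = (if i = j then 1 else 0) - (c * p $ u $ j) * (if i = u then 1 else 0)
          + (if i = u then \<kappa> u * (p$u$j - c * p$u$u * p$u$j) else 0)"
      by (simp add: sum_subtractf sum_distrib_left[symmetric] QPp)
    also have "\<dots> = (if i = j then 1 else 0)"
    proof -
      have "\<kappa> u * (p$u$j - c * p$u$u * p$u$j) - c * p $ u $ j = p$u$j * (\<kappa> u - c * d)"
        unfolding d_def by (simp add: algebra_simps)
      then show ?thesis using cd by auto
    qed
    finally show ?thesis .
  qed
  have "Q (insert u S) ** P' = mat 1"
    using main by (simp add: vec_eq_iff matrix_matrix_mult_def mat_def)
  then have "P (insert u S) = P'" by (rule inv_unique)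
  then show ?thesis by (simp add: P'_def c_def d_def p_def)
qed

end




lemma alg:
  fixes k A A1 b r z x y X1 :: real
  assumes k: "k > 0" and A: "A > 0" and A1: "A1 > 0" and A1d: "A1 = A - k*b*r^2"
    and b: "b \<ge> 0" and r: "r \<ge> 0" and z1: "z*A \<ge> k*r*x" and z2: "z \<ge> b*r*y"
    and X1: "X1 = x - 2*b*r*z + b^2*r^2*y"
  shows "k*X1/A1 \<le> k*x/A"
proof -
  have br: "b*r \<ge> 0" using b r by simp
  have e: "X1*A - x*A1 = (b*r)*(k*r*x - z*A) + (b*r)*A*(b*r*y - z)"
    unfolding X1 A1d by (simp add: algebra_simps power2_eq_square)
  have "(b*r)*(k*r*x - z*A) \<le> 0" using br z1 by (simp add: mult_nonneg_nonpos)
  moreover have "(b*r)*A*(b*r*y - z) \<le> 0" using br A z2 by (simp add: mult_nonneg_nonpos)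
  ultimately have "X1*A \<le> x*A1" using e by linarith
  then have "k*(X1*A) \<le> k*(x*A1)" using k by simp
  then show ?thesis using A A1 by (simp add: divide_le_eq le_divide_eq mult.commute mult.left_commute)
qed

context LF begin

lemma fstep:
  assumes S: "S \<noteq> {}" and u: "u \<notin> S"
  shows "f S - f (insert u S) = \<kappa> u * (\<Sum>i\<in>UNIV. (P S $ i $ u)^2) / (1 + \<kappa> u * P S $ u $ u)"
proof -
  have "f (insert u S) = (\<Sum>i\<in>UNIV. P S $ i $ i - (\<kappa> u / (1 + \<kappa> u * P S $ u $ u)) * (P S $ i $ u)^2)"
    unfolding trQinv_def trace_def
  proof (rule sum.cong)
    fix i
    have "P S $ u $ i = P S $ i $ u" by (rule Psym[OF S])
    then show "P (insert u S) $ i $ i = P S $ i $ i - (\<kappa> u / (1 + \<kappa> u * P S $ u $ u)) * (P S $ i $ u)^2"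
      by (simp add: SM[OF S u] power2_eq_square)
  qed simp
  then show ?thesis unfolding trQinv_def trace_def
    by (simp add: sum_subtractf sum_distrib_left sum_divide_distrib)
qed

lemma fnn: "S \<noteq> {} \<Longrightarrow> f S \<ge> 0"
  unfolding trQinv_def trace_def by (rule sum_nonneg) (rule Pnn)

lemma fdec:
  assumes S: "S \<noteq> {}" and u: "u \<notin> S"
  shows "f (insert u S) < f S"
proof -
  have "\<exists>l. P S $ l $ u \<noteq> 0"
  proof (rule ccontr)
    assume "\<not> ?thesis"
    then show False using QPent[OF S, of u u] by simp
  qed
  then obtain l where l: "P S $ l $ u \<noteq> 0" by blast
  have "0 < (\<Sum>i\<in>{l}. (P S $ i $ u)^2)" using l by simp
  also have "\<dots> \<le> (\<Sum>i\<in>UNIV. (P S $ i $ u)^2)" by (rule sum_mono2) auto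
  finally have x: "0 < (\<Sum>i\<in>UNIV. (P S $ i $ u)^2)" .
  have d: "0 < 1 + \<kappa> u * P S $ u $ u" using Pnn[OF S, of u u] kpos[of u]
    by (simp add: add_pos_nonneg)
  have "0 < \<kappa> u * (\<Sum>i\<in>UNIV. (P S $ i $ u)^2) / (1 + \<kappa> u * P S $ u $ u)"
    using x d kpos[of u] by simp
  then show ?thesis using fstep[OF S u] by linarith
qed

lemma fmono_aux: "finite A \<Longrightarrow> S \<noteq> {} \<Longrightarrow> f (S \<union> A) \<le> f S"
proof (induction A rule: finite_induct)
  case empty then show ?case by simp
next
  case (insert a A)
  show ?case
  proof (cases "a \<in> S \<union> A")
    case True
    then have "S \<union> insert a A = S \<union> A" by auto
    then show ?thesis using insert by simp
  next
    case False
    have "f (insert a (S \<union> A)) < f (S \<union> A)" by (rule fdec) (use insert False in auto)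
    then show ?thesis using insert by simp
  qed
qed

lemma fmono: "S \<noteq> {} \<Longrightarrow> S \<subseteq> T \<Longrightarrow> f T \<le> f S"
  using fmono_aux[of "T - S" S] by (simp add: Un_absorb1 Un_Diff_cancel)

lemma supermod2:
  assumes S: "S \<noteq> {}" and u: "u \<notin> S" and v: "v \<notin> S" and uv: "u \<noteq> v"
  shows "f (insert v S) - f (insert u (insert v S)) \<le> f S - f (insert u S)"
proof -
  define p where "p = P S"
  define b where "b = \<kappa> v / (1 + \<kappa> v * p $ v $ v)"
  define A where "A = 1 + \<kappa> u * p $ u $ u"
  define r where "r = p $ u $ v"
  define x where "x = (\<Sum>i\<in>UNIV. (p $ i $ u)^2)"
  define y where "y = (\<Sum>i\<in>UNIV. (p $ i $ v)^2)"
  define z where "z = (\<Sum>i\<in>UNIV. p $ i $ u * p $ i $ v)"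
  have pnn: "p $ i $ j \<ge> 0" for i j unfolding p_def by (rule Pnn[OF S])
  have psym: "p $ i $ j = p $ j $ i" for i j unfolding p_def by (rule Psym[OF S])
  have Sv: "insert v S \<noteq> {}" and Su: "insert u S \<noteq> {}" by auto
  have uSv: "u \<notin> insert v S" using u uv by auto
  have bnn: "b \<ge> 0" unfolding b_def using pnn[of v v] kpos[of v] by simp
  have Apos: "A > 0" unfolding A_def using pnn[of u u] kpos[of u] by (simp add: add_pos_nonneg)
  have rnn: "r \<ge> 0" unfolding r_def by (rule pnn)
  have P1: "P (insert v S) $ i $ j = p $ i $ j - b * p $ i $ v * p $ v $ j" for i j
    unfolding SM[OF S v] b_def p_def by simp
  have P2: "P (insert u S) $ i $ j = p $ i $ j - (\<kappa> u / A) * p $ i $ u * p $ u $ j" for i j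
    unfolding SM[OF S u] A_def p_def by simp
  have P1u: "P (insert v S) $ i $ u = p $ i $ u - b * r * p $ i $ v" for i
    using P1[of i u] psym[of v u] unfolding r_def by (simp add: algebra_simps)
  have ineq1: "p $ i $ u \<ge> b * r * p $ i $ v" for i
    using Pnn[OF Sv, of i u] P1u[of i] by simp
  have ineq2: "p $ i $ v \<ge> (\<kappa> u / A) * r * p $ i $ u" for i
    using Pnn[OF Su, of i v] P2[of i v] unfolding r_def by (simp add: algebra_simps)
  have z2: "z \<ge> b * r * y"
  proof -
    have "b * r * y = (\<Sum>i\<in>UNIV. (b * r * p $ i $ v) * p $ i $ v)"
      unfolding y_def by (simp add: sum_distrib_left power2_eq_square algebra_simps)
    also have "\<dots> \<le> z" unfolding z_def
      by (rule sum_mono) (rule mult_right_mono[OF ineq1 pnn])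
    finally show ?thesis .
  qed
  have z1: "z * A \<ge> \<kappa> u * r * x"
  proof -
    have "(\<kappa> u / A) * r * x = (\<Sum>i\<in>UNIV. p $ i $ u * ((\<kappa> u / A) * r * p $ i $ u))"
      unfolding x_def by (simp add: sum_distrib_left power2_eq_square algebra_simps)
    also have "\<dots> \<le> z" unfolding z_def
      by (rule sum_mono) (rule mult_left_mono[OF ineq2 pnn])
    finally have "(\<kappa> u / A) * r * x \<le> z" .
    then show ?thesis using Apos by (simp add: pos_divide_le_eq)
  qed
  have X1: "(\<Sum>i\<in>UNIV. (P (insert v S) $ i $ u)^2) = x - 2*b*r*z + b^2*r^2*y"
  proof -
    have "(\<Sum>i\<in>UNIV. (P (insert v S) $ i $ u)^2)
       = (\<Sum>i\<in>UNIV. (p $ i $ u)^2 + ((- 2*b*r) * (p $ i $ u * p $ i $ v) + (b^2*r^2) * (p $ i $ v)^2))"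
      by (rule sum.cong) (simp_all add: P1u power2_eq_square algebra_simps)
    also have "\<dots> = x + ((- 2*b*r) * z + (b^2*r^2) * y)"
      unfolding x_def y_def z_def by (simp only: sum.distrib sum_distrib_left)
    finally show ?thesis by simp
  qed
  have A1: "1 + \<kappa> u * P (insert v S) $ u $ u = A - \<kappa> u * b * r^2"
  proof -
    have "P (insert v S) $ u $ u = p $ u $ u - b * r^2"
      using P1u[of u] psym[of u v] unfolding r_def by (simp add: power2_eq_square)
    then show ?thesis unfolding A_def by (simp add: right_diff_distrib mult.assoc)
  qed
  have A1pos: "1 + \<kappa> u * P (insert v S) $ u $ u > 0"
    using Pnn[OF Sv, of u u] kpos[of u] by (simp add: add_pos_nonneg)
  have "\<kappa> u * (\<Sum>i\<in>UNIV. (P (insert v S) $ i $ u)^2) / (1 + \<kappa> u * P (insert v S) $ u $ u)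
       \<le> \<kappa> u * x / A"
    unfolding A1 by (rule alg[OF kpos Apos A1pos[unfolded A1] refl bnn rnn z1 z2 X1])
  moreover have "f S - f (insert u S) = \<kappa> u * x / A"
    unfolding x_def A_def p_def by (rule fstep[OF S u])
  ultimately show ?thesis using fstep[OF Sv uSv] by linarith
qed

end

context LF begin

definition dd :: "'n set \<Rightarrow> 'n \<Rightarrow> real" where
  "dd S v = f S - f (insert v S)"

lemma dd_nn: "S \<noteq> {} \<Longrightarrow> dd S v \<ge> 0"
  unfolding dd_def using fmono[of S "insert v S"] by auto

lemma dd_anti1:
  assumes S: "S \<noteq> {}"
  shows "dd (insert w S) v \<le> dd S v"
proof (cases "v \<in> S")
  case True
  then have "insert v (insert w S) = insert w S" "insert v S = S" by auto
  then show ?thesis unfolding dd_def by simp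
next
  case vS: False
  show ?thesis
  proof (cases "v = w")
    case True
    then show ?thesis using dd_nn[OF S, of v] unfolding dd_def by simp
  next
    case vw: False
    show ?thesis
    proof (cases "w \<in> S")
      case True
      then have "insert w S = S" by auto
      then show ?thesis by simp
    next
      case False
      show ?thesis unfolding dd_def by (rule supermod2[OF S vS False vw])
    qed
  qed
qed

lemma dd_anti_aux: "finite A \<Longrightarrow> S \<noteq> {} \<Longrightarrow> dd (S \<union> A) v \<le> dd S v"
proof (induction A rule: finite_induct)
  case empty then show ?case by simp
next
  case (insert w A)
  have "dd (insert w (S \<union> A)) v \<le> dd (S \<union> A) v" by (rule dd_anti1) (use insert in auto)
  then show ?case using insert by simp
qed

lemma sub_aux: "finite T \<Longrightarrow> S \<noteq> {} \<Longrightarrow> f S - f (S \<union> T) \<le> (\<Sum>v\<in>T. dd S v)"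
proof (induction T rule: finite_induct)
  case empty then show ?case by simp
next
  case (insert w T)
  have "f S - f (S \<union> insert w T) = (f S - f (S \<union> T)) + dd (S \<union> T) w"
    unfolding dd_def by simp
  also have "\<dots> \<le> (\<Sum>v\<in>T. dd S v) + dd S w"
    using insert dd_anti_aux[of T S w] by (intro add_mono) auto
  finally show ?case using insert by (simp add: add.commute)
qed

lemma exp_bound:
  fixes k :: nat
  assumes k: "k \<ge> 2"
  shows "(1 - 1 / real k) ^ (k - 1) \<le> 2 / exp 1"
proof -
  have k0: "real k \<ge> 2" using k by simp
  have b0: "0 \<le> 1 - 1 / real k" using k0 by simp
  have "1 - 1 / real k \<le> exp (- 1 / real k)"
    using exp_ge_add_one_self[of "- 1 / real k"] by simp
  then have "(1 - 1 / real k) ^ k \<le> exp (- 1 / real k) ^ k"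
    by (rule power_mono[OF _ b0])
  also have "\<dots> = exp (real k * (- 1 / real k))" by (metis exp_of_nat_mult)
  also have "\<dots> = exp (-1)" using k0 by simp
  finally have pk: "(1 - 1 / real k) ^ k \<le> exp (-1)" .
  have kk: "k = Suc (k - 1)" using k by simp
  have "(1 - 1 / real k) ^ k = (1 - 1 / real k) * (1 - 1 / real k) ^ (k - 1)"
    by (subst kk) simp
  moreover have "1 / 2 \<le> 1 - 1 / real k" using k0 by (simp add: field_simps)
  moreover have "(1 / 2) * (1 - 1 / real k) ^ (k - 1) \<le> (1 - 1 / real k) * (1 - 1 / real k) ^ (k - 1)"
    by (rule mult_right_mono) (use \<open>1 / 2 \<le> 1 - 1 / real k\<close> b0 in \<open>simp_all add: zero_le_power\<close>)
  ultimately have "(1 / 2) * (1 - 1 / real k) ^ (k - 1) \<le> exp (-1)"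
    using pk by linarith
  then have "(1 - 1 / real k) ^ (k - 1) \<le> 2 * exp (-1)" by linarith
  then show ?thesis by (simp add: exp_minus divide_inverse)
qed

end

lemma iter:
  fixes g :: "nat \<Rightarrow> real"
  assumes k: "k \<ge> 1" and h: "\<And>i. 1 \<le> i \<Longrightarrow> i < n \<Longrightarrow> g i - fo \<le> real k * (g i - g (Suc i))"
  shows "j < n \<Longrightarrow> g (Suc j) - fo \<le> (1 - 1 / real k) ^ j * (g 1 - fo)"
proof (induction j)
  case 0 then show ?case by simp
next
  case (Suc j)
  have kp: "real k > 0" using k by simp
  have c0: "0 \<le> 1 - 1 / real k" using k by (simp add: field_simps)
  have "g (Suc j) - fo \<le> real k * (g (Suc j) - g (Suc (Suc j)))" using h[of "Suc j"] Suc by simp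
  then have "(g (Suc j) - fo) / real k \<le> g (Suc j) - g (Suc (Suc j))" using kp
    by (simp add: pos_divide_le_eq mult.commute)
  then have "g (Suc (Suc j)) - fo \<le> (1 - 1 / real k) * (g (Suc j) - fo)"
    by (simp add: algebra_simps diff_divide_distrib)
  also have "\<dots> \<le> (1 - 1 / real k) * ((1 - 1 / real k) ^ j * (g 1 - fo))"
    using Suc by (intro mult_left_mono[OF _ c0]) simp
  finally show ?case by simp
qed

context LF begin

lemma greedy_step:
  assumes dist: "distinct vs" and i1: "1 \<le> i" and il: "i < length vs"
    and ch: "\<forall>v. v \<notin> set (take i vs) \<longrightarrow> f (set (take i vs) \<union> {vs ! i}) \<le> f (set (take i vs) \<union> {v})"
    and So: "So \<noteq> {}" "card So \<le> k"
  shows "f (set (take i vs)) - f So \<le> real k * (f (set (take i vs)) - f (set (take (Suc i) vs)))"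
proof -
  define Si where "Si = set (take i vs)"
  have Si: "Si \<noteq> {}" unfolding Si_def using i1 il by (cases vs) auto
  have Suc: "set (take (Suc i) vs) = insert (vs ! i) Si"
    unfolding Si_def using il by (simp add: take_Suc_conv_app_nth)
  have dle: "dd Si v \<le> dd Si (vs ! i)" for v
  proof (cases "v \<in> Si")
    case True
    then have "dd Si v = 0" unfolding dd_def by (simp add: insert_absorb)
    then show ?thesis using dd_nn[OF Si] by simp
  next
    case False
    then show ?thesis using ch unfolding dd_def Si_def by auto
  qed
  have "f Si - f So \<le> f Si - f (Si \<union> So)" using fmono[OF So(1), of "Si \<union> So"] by auto
  also have "\<dots> \<le> (\<Sum>v\<in>So. dd Si v)" by (rule sub_aux[OF _ Si]) simp
  also have "\<dots> \<le> (\<Sum>v\<in>So. dd Si (vs ! i))" by (rule sum_mono) (rule dle)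
  also have "\<dots> = real (card So) * dd Si (vs ! i)" by simp
  also have "\<dots> \<le> real k * dd Si (vs ! i)"
    using So(2) dd_nn[OF Si] by (intro mult_right_mono) auto
  finally show ?thesis unfolding dd_def Suc Si_def .
qed

end

theorem theorem3:
  fixes E :: "'n::finite \<Rightarrow> 'n \<Rightarrow> bool" and \<kappa> :: "'n \<Rightarrow> real"
    and k :: nat and Sg :: "'n set"
  assumes sym: "\<And>u v. E u v \<Longrightarrow> E v u"
    and irrefl: "\<And>v. \<not> E v v"
    and conn: "graph_connected E"
    and kpos: "\<And>i. \<kappa> i > 0"
    and k1: "k \<ge> 1"
    and greedy: "greedy_output E \<kappa> k Sg"
  shows "(card Sg < k \<longrightarrow> Hval E \<kappa> Sg = Hhat E \<kappa> k) \<and>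
         (card Sg = k \<longrightarrow>
            Hval E \<kappa> Sg \<le> (1 - 1 / exp 1) * Hhat E \<kappa> k + Bval E \<kappa> / exp 1)"
proof -
  interpret LF E \<kappa> using assms by unfold_locales auto
  obtain vs where vs0: "vs \<noteq> []" and dist: "distinct vs" and lk: "length vs \<le> k" and Sg: "Sg = set vs"
    and first: "\<forall>v. f {hd vs} \<le> f {v}"
    and steps: "\<forall>i. 1 \<le> i \<and> i < length vs \<longrightarrow>
            (\<forall>v. v \<notin> set (take i vs) \<longrightarrow>
                 f (set (take i vs) \<union> {vs ! i}) \<le> f (set (take i vs) \<union> {v})) \<and>
            f (set (take i vs) \<union> {vs ! i}) < f (set (take i vs))"
    and stop: "length vs < k \<longrightarrow> (\<forall>v. v \<notin> set vs \<longrightarrow> f (set vs) \<le> f (set vs \<union> {v}))"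
    using greedy unfolding greedy_output_def by blast
  define C where "C = {S :: 'n set. S \<noteq> {} \<and> card S \<le> k}"
  have Cfin: "finite C" by simp
  have hd1: "{hd vs} \<in> C" unfolding C_def using k1 by simp
  have Hh: "Hhat E \<kappa> k = Min (Hval E \<kappa> ` C)" unfolding Hhat_def C_def by simp
  have Hle: "Hhat E \<kappa> k \<le> Hval E \<kappa> X" if "X \<in> C" for X
    unfolding Hh using Cfin that by (intro Min_le) auto
  have "Hhat E \<kappa> k \<in> Hval E \<kappa> ` C" unfolding Hh using Cfin hd1 by (intro Min_in) auto
  then obtain So where So: "So \<in> C" and HSo: "Hval E \<kappa> So = Hhat E \<kappa> k" by auto
  have So1: "So \<noteq> {}" and So2: "card So \<le> k" using So unfolding C_def by auto
  have cardSg: "card Sg = length vs" unfolding Sg using dist by (simp add: distinct_card)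
  have part1: "Hval E \<kappa> Sg = Hhat E \<kappa> k" if lt: "card Sg < k"
  proof -
    have "Sg = UNIV"
    proof (rule ccontr)
      assume "Sg \<noteq> UNIV"
      then obtain v where v: "v \<notin> set vs" using Sg by auto
      have "f (set vs) \<le> f (set vs \<union> {v})" using stop lt cardSg v by auto
      moreover have "f (insert v (set vs)) < f (set vs)" by (rule fdec) (use vs0 v in auto)
      ultimately show False by simp
    qed
    then have UC: "Sg \<in> C" unfolding C_def using lt by auto
    have "Hval E \<kappa> Sg \<le> Hval E \<kappa> X" if "X \<in> C" for X
      using fmono[of X Sg] that \<open>Sg = UNIV\<close> unfolding C_def Hval_def by auto
    then have "Hval E \<kappa> Sg \<le> Hhat E \<kappa> k" using So HSo by metis
    then show ?thesis using Hle[OF UC] by simp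
  qed
  have part2: "Hval E \<kappa> Sg \<le> (1 - 1 / exp 1) * Hhat E \<kappa> k + Bval E \<kappa> / exp 1" if eq: "card Sg = k"
  proof -
    have lvs: "length vs = k" using eq cardSg by simp
    define g where "g i = f (set (take i vs))" for i
    define fo where "fo = f So"
    have gk: "g k = f Sg" unfolding g_def Sg using lvs by simp
    have g1: "g 1 = f {hd vs}" unfolding g_def using vs0 by (cases vs) auto
    have fo0: "fo \<ge> 0" unfolding fo_def by (rule fnn[OF So1])
    have Bg: "g 1 \<le> Bval E \<kappa>" unfolding g1 Bval_def by (rule Max_ge) auto
    have fog: "fo \<le> g 1" unfolding fo_def g1 HSo[symmetric, unfolded Hval_def]
      using Hle[OF hd1] HSo unfolding Hval_def fo_def by simp
    have rec: "g i - fo \<le> real k * (g i - g (Suc i))" if "1 \<le> i" "i < k" for i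
      unfolding g_def fo_def
      by (rule greedy_step[OF dist that(1) _ _ So1 So2]) (use that lvs steps in auto)
    have it: "g (Suc (k - 1)) - fo \<le> (1 - 1 / real k) ^ (k - 1) * (g 1 - fo)"
      by (rule iter[where n=k and g=g and fo=fo, OF k1 rec]) (use k1 in auto)
    have HS: "Hval E \<kappa> Sg = f Sg / 2" unfolding Hval_def by simp
    have HH: "Hhat E \<kappa> k = fo / 2" unfolding fo_def using HSo unfolding Hval_def by simp
    define c where "c = (1 - 1 / real k) ^ (k - 1)"
    define e :: real where "e = 1 / exp 1"
    have e0: "e > 0" unfolding e_def by simp
    have Bexp: "Bval E \<kappa> / exp 1 = Bval E \<kappa> * e" unfolding e_def by simp
    have fin: "Hval E \<kappa> Sg \<le> (1 - 1 / exp 1) * Hhat E \<kappa> k + Bval E \<kappa> / exp 1"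
      if H: "f Sg \<le> (1 - e) * fo + 2 * Bval E \<kappa> * e"
    proof -
      have "(1 - e) * (fo / 2) + Bval E \<kappa> * e = ((1 - e) * fo + 2 * Bval E \<kappa> * e) / 2"
        by (simp add: field_simps)
      then have "f Sg / 2 \<le> (1 - e) * (fo / 2) + Bval E \<kappa> * e" using H by linarith
      then show ?thesis unfolding HS HH Bexp e_def .
    qed
    show ?thesis
    proof (cases "k = 1")
      case True
      have "card So \<noteq> 0" using So1 by simp
      then have "card So = 1" using So2 True by linarith
      then obtain w where w: "So = {w}" by (rule card_1_singletonE)
      have "g 1 = f Sg" using gk True by simp
      then have "f Sg \<le> fo" using first g1 w unfolding fo_def by metis
      moreover have "fo \<le> Bval E \<kappa>" using fog Bg by simp
      ultimately have "f Sg \<le> (1 - e) * fo + 2 * Bval E \<kappa> * e"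
      proof -
        have "e * fo \<le> e * (2 * Bval E \<kappa>)"
          using e0 fo0 \<open>fo \<le> Bval E \<kappa>\<close> by (intro mult_left_mono) auto
        then show ?thesis using \<open>f Sg \<le> fo\<close> by (simp add: algebra_simps)
      qed
      then show ?thesis by (rule fin)
    next
      case False
      then have k2: "k \<ge> 2" using k1 by simp
      have c0: "c \<ge> 0" unfolding c_def using k1 by (simp add: field_simps)
      have c2: "c \<le> 2 * e" unfolding c_def e_def using exp_bound[OF k2] by simp
      have "f Sg - fo \<le> c * (g 1 - fo)" using it k1 unfolding c_def by (simp add: gk)
      also have "\<dots> \<le> c * (Bval E \<kappa> - fo)" using Bg c0 by (intro mult_left_mono) auto
      finally have a: "f Sg \<le> fo + c * (Bval E \<kappa> - fo)" by simp
      have "c * (Bval E \<kappa> - fo) \<le> (2 * e) * (Bval E \<kappa> - fo)"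
        using c2 fog Bg by (intro mult_right_mono) auto
      moreover have "e * fo \<le> (2 * e) * fo" using e0 fo0 by simp
      ultimately have "f Sg \<le> (1 - e) * fo + 2 * Bval E \<kappa> * e" using a
        by (simp add: algebra_simps)
      then show ?thesis by (rule fin)
    qed
  qed
  show ?thesis using part1 part2 by blast
qed

end
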